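(* Let $n\ge1$ and let $\tau>0$ be real. For an integer $T\ge1$, let $N(T)$ be the number of integer vectors $w\in\{0,1,\dots,T-1\}^n$ such that $e(w/T)\le T^{\frac{1-\tau}{n+1}}$. Then $N(T)/T^n\to 0$ as $T\to\infty$.
   Context: For $\omega\in\mathbb{R}^n$, $R(\omega)=\{k\in\mathbb{Z}^n:\langle k,\omega\rangle\in\mathbb{Z}\}$, $|k|=\max_i|k_i|$, and $e(\omega)=\min_{k\in R(\omega)\setminus\{0\}}|k|$ (for $\omega=w/T$ with $w\in\mathbb{Z}^n$, $R(\omega)$ contains $T\mathbb{Z}^n$, so this minimum exists). *)

theory Defs
  imports "HOL-Analysis.Analysis"
begin

definition resonance_lattice :: "real^'n \<Rightarrow> (int^'n) set" where
  "resonance_lattice \<omega> = {k. (\<Sum>i\<in>UNIV. of_int (k$i) * \<omega>$i) \<in> \<int>}"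

definition maxnorm :: "int^'n \<Rightarrow> nat" where
  "maxnorm k = Max (range (\<lambda>i. nat \<bar>k$i\<bar>))"

definition e_res :: "real^'n \<Rightarrow> nat" where
  "e_res \<omega> = (LEAST m. \<exists>k\<in>resonance_lattice \<omega>. k \<noteq> 0 \<and> maxnorm k = m)"

definition N_count :: "real \<Rightarrow> nat \<Rightarrow> 'n::finite itself \<Rightarrow> nat" where
  "N_count \<tau> T _ = card {w :: int^'n. (\<forall>i. 0 \<le> w$i \<and> w$i < int T) \<and>
      real (e_res (\<chi> i. real_of_int (w$i) / real T))
        \<le> real T powr ((1 - \<tau>) / (real CARD('n) + 1))}"

end

theory Submission imports Defs begin

lemma box_card:
  assumes "finite A"
  shows "finite {k::'a^'n::finite. \<forall>i. k$i \<in> A} \<and> card {k::'a^'n. \<forall>i. k$i \<in> A} \<le> card A ^ CARD('n)"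
proof -
  have inj: "inj_on (\<lambda>k i. k$i) {k::'a^'n. \<forall>i. k$i \<in> A}"
    by (simp add: inj_on_def vec_eq_iff fun_eq_iff)
  have sub: "(\<lambda>k i. k$i) ` {k::'a^'n. \<forall>i. k$i \<in> A} \<subseteq> (UNIV::'n set) \<rightarrow>\<^sub>E A"
    by auto
  have fin: "finite ((UNIV::'n set) \<rightarrow>\<^sub>E A)" using assms by (simp add: finite_PiE)
  show ?thesis
    using inj_on_finite[OF inj sub fin] card_inj_on_le[OF inj sub fin] card_funcsetE[of "UNIV::'n set" A]
    by simp
qed

lemma Ak_card:
  fixes k :: "int^'n::finite" and T m :: nat
  assumes "k \<noteq> 0" "\<forall>i. \<bar>k$i\<bar> \<le> int m" "T \<ge> 1"
  shows "card {w::int^'n. (\<forall>i. 0 \<le> w$i \<and> w$i < int T) \<and> int T dvd (\<Sum>i\<in>UNIV. k$i * w$i)}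
     \<le> (2*CARD('n)*m+1) * T^(CARD('n)-1)"
proof -
  obtain j where j: "k$j \<noteq> 0" using assms(1) by (metis vec_eq_iff zero_index)
  let ?A = "{w::int^'n. (\<forall>i. 0 \<le> w$i \<and> w$i < int T) \<and> int T dvd (\<Sum>i\<in>UNIV. k$i * w$i)}"
  let ?n = "int (CARD('n) * m)"
  define f where "f = (\<lambda>w::int^'n. (restrict (\<lambda>i. w$i) (UNIV - {j}), (\<Sum>i\<in>UNIV. k$i * w$i) div int T))"
  let ?B = "((UNIV - {j}) \<rightarrow>\<^sub>E {0..<int T}) \<times> {-?n..?n}"
  have inj: "inj_on f ?A"
  proof (rule inj_onI)
    fix w w' assume w: "w \<in> ?A" and w': "w' \<in> ?A" and eq: "f w = f w'"
    have oth: "\<forall>i. i \<noteq> j \<longrightarrow> w$i = w'$i"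
      using eq unfolding f_def by (metis (no_types, lifting) DiffI UNIV_I prod.inject restrict_apply' singletonD)
    have s: "(\<Sum>i\<in>UNIV. k$i * w$i) = (\<Sum>i\<in>UNIV. k$i * w'$i)"
    proof -
      have "(\<Sum>i\<in>UNIV. k$i * w$i) div int T = (\<Sum>i\<in>UNIV. k$i * w'$i) div int T"
        using eq unfolding f_def by simp
      with w w' show ?thesis by (metis (no_types, lifting) dvd_div_mult_self mem_Collect_eq)
    qed
    have r: "(\<Sum>i\<in>UNIV - {j}. k$i * w$i) = (\<Sum>i\<in>UNIV - {j}. k$i * w'$i)"
      using oth by (intro sum.cong) auto
    have "k$j * w$j = k$j * w'$j"
      using s r sum.remove[of "UNIV::'n set" j "\<lambda>i. k$i * w$i"] sum.remove[of "UNIV::'n set" j "\<lambda>i. k$i * w'$i"]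
      by simp
    with j have "w$j = w'$j" by simp
    with oth show "w = w'" by (metis vec_eq_iff)
  qed
  have sub: "f ` ?A \<subseteq> ?B"
  proof
    fix x assume "x \<in> f ` ?A"
    then obtain w where w: "w \<in> ?A" and x: "x = f w" by auto
    let ?s = "\<Sum>i\<in>UNIV. k$i * w$i"
    obtain q where q: "?s = int T * q" using w by (auto elim: dvdE)
    have "\<bar>?s\<bar> \<le> (\<Sum>i\<in>UNIV. \<bar>k$i * w$i\<bar>)" by (rule sum_abs)
    also have "\<dots> \<le> (\<Sum>i\<in>(UNIV::'n set). int m * int T)"
    proof (intro sum_mono)
      fix i
      have "\<bar>w$i\<bar> \<le> int T" using w by (smt (verit) mem_Collect_eq)
      moreover have "\<bar>k$i\<bar> \<le> int m" using assms(2) by auto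
      ultimately show "\<bar>k$i * w$i\<bar> \<le> int m * int T"
        by (simp add: abs_mult mult_mono)
    qed
    also have "\<dots> = ?n * int T" by simp
    finally have "\<bar>int T * q\<bar> \<le> ?n * int T" using q by simp
    hence "\<bar>q\<bar> * int T \<le> ?n * int T" by (simp add: abs_mult mult.commute)
    hence "\<bar>q\<bar> \<le> ?n" using assms(3) by (simp add: mult_le_cancel_right)
    moreover have "?s div int T = q" using q assms(3) by simp
    ultimately show "x \<in> ?B" using w unfolding x f_def by auto
  qed
  have finB: "finite ?B" by (simp add: finite_PiE)
  have "card ?A \<le> card ?B" by (rule card_inj_on_le[OF inj sub finB])
  also have "card ?B = T^(CARD('n)-1) * nat (2*?n+1)"
    by (simp add: card_cartesian_product card_funcsetE card_Diff_singleton mult.commute)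
  also have "nat (2*?n+1) = 2*CARD('n)*m+1" by (simp add: nat_add_distrib nat_mult_distrib)
  finally show ?thesis by (simp add: mult.commute)
qed

lemma N_bound:
  fixes T m :: nat and M :: real
  assumes T: "T \<ge> 1" and mM: "m = nat \<lfloor>M\<rfloor>"
  shows "card {w :: int^'n::finite. (\<forall>i. 0 \<le> w$i \<and> w$i < int T) \<and>
      real (e_res (\<chi> i. real_of_int (w$i) / real T)) \<le> M}
     \<le> (2*m+1)^CARD('n) * ((2*CARD('n)*m+1) * T^(CARD('n)-1))"
proof -
  let ?K = "{k::int^'n. \<forall>i. k$i \<in> {-int m..int m}} - {0}"
  define A where "A = (\<lambda>k::int^'n. {w::int^'n. (\<forall>i. 0 \<le> w$i \<and> w$i < int T) \<and> int T dvd (\<Sum>i\<in>UNIV. k$i * w$i)})"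
  let ?N = "{w :: int^'n. (\<forall>i. 0 \<le> w$i \<and> w$i < int T) \<and>
      real (e_res (\<chi> i. real_of_int (w$i) / real T)) \<le> M}"
  have boxfin: "finite {w::int^'n. \<forall>i. w$i \<in> {0..<int T}}" using box_card[of "{0..<int T}", where 'n='n] by simp
  have Afin: "finite (A k)" for k
    by (rule finite_subset[OF _ boxfin]) (auto simp: A_def)
  have Kfin: "finite ?K" using box_card[of "{-int m..int m}", where 'n='n] by simp
  have Kcard: "card ?K \<le> (2*m+1)^CARD('n)"
  proof -
    have "card ?K \<le> card {k::int^'n. \<forall>i. k$i \<in> {-int m..int m}}"
      using box_card[of "{-int m..int m}", where 'n='n] by (intro card_mono) auto
    also have "\<dots> \<le> card {-int m..int m} ^ CARD('n)" using box_card[of "{-int m..int m}", where 'n='n] by simp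
    also have "card {-int m..int m} = 2*m+1" by simp
    finally show ?thesis .
  qed
  have sub: "?N \<subseteq> (\<Union>k\<in>?K. A k)"
  proof
    fix w assume w: "w \<in> ?N"
    define \<omega> where "\<omega> = (\<chi> i. real_of_int (w$i) / real T)"
    let ?P = "\<lambda>e. \<exists>k\<in>resonance_lattice \<omega>. k \<noteq> 0 \<and> maxnorm k = e"
    have ex: "\<exists>e. ?P e"
    proof (intro exI bexI conjI)
      let ?k0 = "(\<chi> i. int T) :: int^'n"
      show "?k0 \<noteq> 0" using T by (simp add: vec_eq_iff)
      have "(\<Sum>i\<in>UNIV. of_int (?k0$i) * \<omega>$i) = (\<Sum>i\<in>UNIV. real_of_int (w$i))"
        using T by (simp add: \<omega>_def)
      also have "\<dots> \<in> \<int>" by (intro Ints_sum) auto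
      finally show "?k0 \<in> resonance_lattice \<omega>" by (simp add: resonance_lattice_def)
    qed simp
    have "?P (e_res \<omega>)" unfolding e_res_def by (rule LeastI_ex[OF ex])
    then obtain k where k: "k \<in> resonance_lattice \<omega>" "k \<noteq> 0" "maxnorm k = e_res \<omega>" by blast
    have "real (maxnorm k) \<le> M" using w k(3) by (simp add: \<omega>_def)
    hence km: "maxnorm k \<le> m" using mM by (simp add: le_nat_floor)
    have kb: "\<bar>k$i\<bar> \<le> int m" for i
    proof -
      have "nat \<bar>k$i\<bar> \<le> maxnorm k" unfolding maxnorm_def by (intro Max_ge) auto
      with km show ?thesis by linarith
    qed
    have "(\<Sum>i\<in>UNIV. of_int (k$i) * \<omega>$i) \<in> \<int>" using k(1) by (simp add: resonance_lattice_def)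
    moreover have "(\<Sum>i\<in>UNIV. of_int (k$i) * \<omega>$i) = real_of_int (\<Sum>i\<in>UNIV. k$i * w$i) / real T"
      by (simp add: \<omega>_def sum_divide_distrib)
    ultimately obtain z where z: "real_of_int (\<Sum>i\<in>UNIV. k$i * w$i) / real T = real_of_int z"
      by (metis Ints_cases)
    hence "real_of_int (\<Sum>i\<in>UNIV. k$i * w$i) = real T * real_of_int z" using T
      by (simp add: divide_eq_eq mult.commute)
    hence "(\<Sum>i\<in>UNIV. k$i * w$i) = int T * z" by (metis of_int_eq_iff of_int_mult of_int_of_nat_eq)
    hence "w \<in> A k" using w by (auto simp: A_def)
    moreover have "k \<in> ?K" using k(2) kb by (auto simp: abs_le_iff) (smt (verit) kb)
    ultimately show "w \<in> (\<Union>k\<in>?K. A k)" by blast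
  qed
  have "card ?N \<le> card (\<Union>k\<in>?K. A k)"
    by (rule card_mono[OF _ sub]) (use Kfin Afin in auto)
  also have "\<dots> \<le> (\<Sum>k\<in>?K. card (A k))" by (rule card_UN_le[OF Kfin])
  also have "\<dots> \<le> (\<Sum>k\<in>?K. (2*CARD('n)*m+1) * T^(CARD('n)-1))"
  proof (intro sum_mono)
    fix k assume "k \<in> ?K"
    hence "k \<noteq> 0" "\<forall>i. \<bar>k$i\<bar> \<le> int m" by (auto simp: abs_le_iff) (smt (verit))
    thus "card (A k) \<le> (2*CARD('n)*m+1) * T^(CARD('n)-1)"
      unfolding A_def using Ak_card T by blast
  qed
  also have "\<dots> = card ?K * ((2*CARD('n)*m+1) * T^(CARD('n)-1))" by simp
  also have "\<dots> \<le> (2*m+1)^CARD('n) * ((2*CARD('n)*m+1) * T^(CARD('n)-1))"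
    using Kcard by (rule mult_right_mono) simp
  finally show ?thesis .
qed


theorem mainTheorem4:
  fixes \<tau> :: real
  assumes "\<tau> > 0"
  shows "(\<lambda>T::nat. real (N_count \<tau> T TYPE('n::finite)) / real T ^ CARD('n))
           \<longlonglongrightarrow> 0"
proof -
  define n where "n = CARD('n)"
  define a where "a = (1 - \<tau>) / (real n + 1)"
  define b where "b = max a 0"
  define C where "C = 3^n * (2 * real n + 1)"
  define c where "c = b * (real n + 1) - 1"
  have n1: "n \<ge> 1" unfolding n_def by (simp add: Suc_leI)
  have b0: "b \<ge> 0" unfolding b_def by simp
  have bc: "b * (real n + 1) = max (1 - \<tau>) 0"
  proof -
    have p: "real n + 1 > 0" by simp
    have e: "a * (real n + 1) = 1 - \<tau>" unfolding a_def using p by simp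
    show ?thesis
    proof (cases "1 - \<tau> \<ge> 0")
      case True
      hence "a \<ge> 0" unfolding a_def using p by simp
      thus ?thesis using e True unfolding b_def by simp
    next
      case False
      hence "a < 0" unfolding a_def using p by (simp add: divide_neg_pos)
      thus ?thesis using False unfolding b_def by simp
    qed
  qed
  have c0: "c < 0" unfolding c_def bc using assms by simp
  have lim: "(\<lambda>T::nat. C * real T powr c) \<longlonglongrightarrow> 0"
    using tendsto_mult_right_zero[OF tendsto_neg_powr[OF c0 filterlim_real_sequentially]] by simp
  have bound: "real (N_count \<tau> T TYPE('n)) / real T ^ CARD('n) \<le> C * real T powr c"
    if T: "T \<ge> 1" for T :: nat
  proof -
    define x where "x = real T"
    have x1: "x \<ge> 1" using T by (simp add: x_def algebra_simps)
    define m where "m = nat \<lfloor>x powr a\<rfloor>"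
    define P where "P = x powr b"
    have P1: "P \<ge> 1" unfolding P_def using x1 b0 by (simp add: ge_one_powr_ge_zero)
    have mP: "real m \<le> P"
    proof -
      have "real m \<le> x powr a" unfolding m_def using x1 by simp
      also have "\<dots> \<le> P" unfolding P_def b_def using x1 by (intro powr_mono) auto
      finally show ?thesis .
    qed
    have Nb: "N_count \<tau> T TYPE('n) \<le> (2*m+1)^n * ((2*n*m+1) * T^(n-1))"
      unfolding N_count_def n_def
      using N_bound[OF T, of m "x powr a", where 'n='n] unfolding m_def x_def a_def n_def by simp
    have "real (N_count \<tau> T TYPE('n)) \<le> real ((2*m+1)^n * ((2*n*m+1) * T^(n-1)))"
      using Nb by linarith
    also have "\<dots> = (2*real m+1)^n * ((2*real n*real m+1) * x^(n-1))" by (simp add: x_def algebra_simps)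
    also have "\<dots> \<le> (3*P)^n * ((2*real n+1)*P * x^(n-1))"
    proof (intro mult_mono power_mono)
      show "2 * real m + 1 \<le> 3 * P" using mP P1 by linarith
      have "2*real n*real m \<le> 2*real n * P" using mP by (simp add: mult_left_mono)
      thus "2 * real n * real m + 1 \<le> (2 * real n + 1) * P" using P1 by (simp add: algebra_simps)
    qed (use P1 x1 in auto)
    also have "\<dots> = C * (P^(n+1) * x^(n-1))" by (simp add: C_def power_mult_distrib algebra_simps)
    finally have le: "real (N_count \<tau> T TYPE('n)) \<le> C * (P^(n+1) * x^(n-1))" .
    have Pp: "P^(n+1) = x powr (b * (real n + 1))"
      unfolding P_def using x1 by (simp add: powr_realpow[symmetric] powr_powr powr_add[symmetric] algebra_simps)
    have xn: "x^n = x * x^(n-1)" using n1 by (metis Suc_diff_le diff_Suc_1 power_Suc)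
    have "real (N_count \<tau> T TYPE('n)) / x^n \<le> C * (P^(n+1) * x^(n-1)) / x^n"
      using le x1 by (simp add: divide_right_mono)
    also have "\<dots> = C * P^(n+1) / x" using x1 unfolding xn by (simp add: field_simps)
    also have "\<dots> = C * real T powr c"
      using x1 unfolding Pp c_def x_def by (simp add: powr_diff)
    finally show ?thesis unfolding x_def n_def .
  qed
  show ?thesis
  proof (rule tendsto_sandwich[OF _ _ tendsto_const lim])
    show "\<forall>\<^sub>F T in sequentially. 0 \<le> real (N_count \<tau> T TYPE('n)) / real T ^ CARD('n)" by simp
    show "\<forall>\<^sub>F T in sequentially. real (N_count \<tau> T TYPE('n)) / real T ^ CARD('n) \<le> C * real T powr c"
      using eventually_ge_at_top[of 1] by eventually_elim (rule bound)
  qed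
qed

end
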